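(* Let $n_1,n_2,n_3\ge2$, $r\ge1$, $b>0$, $\beta\ge3$ and $\vartheta=2^{\lceil\beta\log_2(n_1\vee n_2)\rceil}$. Let $\mathcal{A}^*\in\mathbb{R}_+^{n_1\times r\times n_3}$ with $0\le\mathcal{A}^*_{ijk}\le1$, $\mathcal{B}^*\in\mathbb{R}_+^{r\times n_2\times n_3}$ with $0\le\mathcal{B}^*_{ijk}\le b$, and $\mathcal{X}^*=\mathcal{A}^*\diamond\mathcal{B}^*$. Let $\widetilde{\mathcal{A}}^*\in\mathfrak{L}$ be obtained by replacing each entry of $\mathcal{A}^*$ by its closest discretization level, and $\widetilde{\mathcal{B}}^*\in\mathfrak{D}$ be obtained by replacing each nonzero entry of $\mathcal{B}^*$ by its closest discretization level in $[0,b]$ and keeping zero entries zero. Then $\widetilde{\mathcal{X}}^*=\widetilde{\mathcal{A}}^*\diamond\widetilde{\mathcal{B}}^*$ satisfies \[ \|\widetilde{\mathcal{X}}^*-\mathcal{X}^*\|_\infty\le\frac{3rn_3b}{\vartheta}. \]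
   Context: Tensor-tensor product $\diamond$: for $\mathcal{X}\in\mathbb{R}^{n_1\times n_2\times n_3}$ with frontal slices $\mathbf{X}^{(1)},\dots,\mathbf{X}^{(n_3)}$ and $\mathcal{Y}\in\mathbb{R}^{n_2\times n_4\times n_3}$, $\mathcal{X}\diamond\mathcal{Y}$ is obtained by multiplying the block-circulant matrix with $(p,q)$ block $\mathbf{X}^{((p-q)\bmod n_3+1)}$ by the vertical stack of the frontal slices of $\mathcal{Y}$ and folding back. $\|\mathcal{X}\|_\infty=\max_{i,j,k}|\mathcal{X}_{ijk}|$; $m\vee n=\max\{m,n\}$. $\mathfrak{L}$ is the set of tensors in $\mathbb{R}_+^{n_1\times r\times n_3}$ whose entries each equal one of the $\vartheta$ uniformly spaced levels $\{0,\frac{1}{\vartheta-1},\dots,1\}$ of $[0,1]$; $\mathfrak{D}$ is the set of tensors in $\mathbb{R}_+^{r\times n_2\times n_3}$ whose entries are each either $0$ or one of the $\vartheta$ uniformly spaced levels $\{0,\frac{b}{\vartheta-1},\dots,b\}$ of $[0,b]$. *)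

theory Defs
  imports Complex_Main
begin

text \<open>Third-order tensors are represented as functions nat => nat => nat => real,
  with entries outside the index ranges irrelevant (0-based indices).\<close>

text \<open>Tensor-tensor product: X is n1 x n2 x n3, Y is n2 x n4 x n3.
  Frontal slice k of the result is  sum_q X^((k-q) mod n3) Y^(q).\<close>
definition tprod :: "nat \<Rightarrow> nat \<Rightarrow> (nat \<Rightarrow> nat \<Rightarrow> nat \<Rightarrow> real)
    \<Rightarrow> (nat \<Rightarrow> nat \<Rightarrow> nat \<Rightarrow> real) \<Rightarrow> (nat \<Rightarrow> nat \<Rightarrow> nat \<Rightarrow> real)" where
  "tprod n2 n3 X Y = (\<lambda>i l k. \<Sum>j<n2. \<Sum>q<n3. X i j ((k + n3 - q) mod n3) * Y j l q)"

definition tinf_norm :: "nat \<Rightarrow> nat \<Rightarrow> nat \<Rightarrow> (nat \<Rightarrow> nat \<Rightarrow> nat \<Rightarrow> real) \<Rightarrow> real" where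
  "tinf_norm n1 n2 n3 X = Max {\<bar>X i j k\<bar> | i j k. i < n1 \<and> j < n2 \<and> k < n3}"

definition levels :: "nat \<Rightarrow> real \<Rightarrow> real set" where
  "levels \<theta> c = {real t * c / (real \<theta> - 1) | t. t < \<theta>}"

definition closest_level :: "nat \<Rightarrow> real \<Rightarrow> real \<Rightarrow> real \<Rightarrow> bool" where
  "closest_level \<theta> c x y \<longleftrightarrow> y \<in> levels \<theta> c \<and> (\<forall>z \<in> levels \<theta> c. \<bar>y - x\<bar> \<le> \<bar>z - x\<bar>)"

end

theory Submission imports Defs begin

lemma cl_bound:
  fixes \<theta> :: nat and c x y :: real
  assumes th: "\<theta> \<ge> 2" and c: "c > 0" and x: "0 \<le> x" "x \<le> c"
    and cl: "closest_level \<theta> c x y"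
  shows "\<bar>y - x\<bar> \<le> c / (2 * (real \<theta> - 1))" and "0 \<le> y" and "y \<le> c"
proof -
  define h where "h = c / (real \<theta> - 1)"
  have hp: "h > 0" using th c by (simp add: h_def)
  define t where "t = nat (round (x / h))"
  have r0: "round (x / h) \<ge> 0" using round_mono[of 0 "x/h"] x hp by simp
  have "x * (real \<theta> - 1) \<le> c * (real \<theta> - 1)" using x th by (intro mult_right_mono) auto
  then have "x / h \<le> real \<theta> - 1" using x th hp by (simp add: h_def field_simps)
  then have "round (x / h) \<le> round (real_of_int (int \<theta> - 1))" using th
    by (intro round_mono) (simp add: of_nat_diff)
  moreover have "round (real_of_int (int \<theta> - 1)) = int \<theta> - 1" by (rule round_of_int)
  ultimately have "round (x / h) \<le> int \<theta> - 1" by simp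
  then have tlt: "t < \<theta>" using r0 th unfolding t_def by linarith
  have tr: "real t = of_int (round (x / h))" using r0 by (simp add: t_def)
  have "real t * c / (real \<theta> - 1) \<in> levels \<theta> c" using tlt unfolding levels_def by blast
  then have "\<bar>y - x\<bar> \<le> \<bar>real t * h - x\<bar>" using cl unfolding closest_level_def h_def by auto
  also have "real t * h - x = (of_int (round (x / h)) - x / h) * h" using hp tr by (simp add: field_simps)
  also have "\<bar>\<dots>\<bar> \<le> 1/2 * h" unfolding abs_mult using hp
    mult_right_mono[OF of_int_round_abs_le[of "x/h"], of h] by simp
  finally show "\<bar>y - x\<bar> \<le> c / (2 * (real \<theta> - 1))" by (simp add: h_def)
  from cl obtain s where s: "s < \<theta>" "y = real s * c / (real \<theta> - 1)"
    unfolding closest_level_def levels_def by auto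
  show "0 \<le> y" using s th c by simp
  have "real s \<le> real \<theta> - 1" using s by linarith
  then have "real s * c \<le> (real \<theta> - 1) * c" using c by (intro mult_right_mono) auto
  then have "real s * c / (real \<theta> - 1) \<le> (real \<theta> - 1) * c / (real \<theta> - 1)"
    using th by (intro divide_right_mono) auto
  then show "y \<le> c" using s th by simp
qed

theorem lemma2:
  fixes n1 n2 n3 r :: nat and b \<beta> :: real and \<theta> :: nat
    and A B At Bt :: "nat \<Rightarrow> nat \<Rightarrow> nat \<Rightarrow> real"
  assumes "n1 \<ge> 2" and "n2 \<ge> 2" and "n3 \<ge> 2" and "r \<ge> 1"
    and "b > 0" and "\<beta> \<ge> 3"
    and "\<theta> = 2 ^ nat \<lceil>\<beta> * log 2 (real (max n1 n2))\<rceil>"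
    and "\<And>i j k. i < n1 \<Longrightarrow> j < r \<Longrightarrow> k < n3 \<Longrightarrow> 0 \<le> A i j k \<and> A i j k \<le> 1"
    and "\<And>i j k. i < r \<Longrightarrow> j < n2 \<Longrightarrow> k < n3 \<Longrightarrow> 0 \<le> B i j k \<and> B i j k \<le> b"
    and "\<And>i j k. i < n1 \<Longrightarrow> j < r \<Longrightarrow> k < n3 \<Longrightarrow> closest_level \<theta> 1 (A i j k) (At i j k)"
    and "\<And>i j k. i < r \<Longrightarrow> j < n2 \<Longrightarrow> k < n3 \<Longrightarrow>
           (if B i j k = 0 then Bt i j k = 0 else closest_level \<theta> b (B i j k) (Bt i j k))"
  shows "tinf_norm n1 n2 n3 (\<lambda>i j k. tprod r n3 At Bt i j k - tprod r n3 A B i j k)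
           \<le> 3 * real r * real n3 * b / real \<theta>"
proof -
  note A = assms(8) and B = assms(9) and At = assms(10) and Bt = assms(11)
  have "real (max n1 n2) \<ge> 2" using assms(1) by simp
  then have "log 2 (real (max n1 n2)) \<ge> 1" by simp
  then have "\<beta> * log 2 (real (max n1 n2)) \<ge> 3 * 1" using assms(6)
    by (intro mult_mono) auto
  then have "nat \<lceil>\<beta> * log 2 (real (max n1 n2))\<rceil> \<ge> 1" by linarith
  then have "(2::nat) ^ 1 \<le> 2 ^ nat \<lceil>\<beta> * log 2 (real (max n1 n2))\<rceil>"
    by (intro power_increasing) auto
  then have th: "\<theta> \<ge> 2" using assms(7) by simp
  define e where "e = b / (real \<theta> - 1)"
  have ep: "e \<ge> 0" using th assms(5) by (simp add: e_def)
  have tmb: "\<bar>At i j m * Bt j l q - A i j m * B j l q\<bar> \<le> e"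
    if "i < n1" "j < r" "m < n3" "l < n2" "q < n3" for i j m l q
  proof -
    have a: "0 \<le> A i j m" "A i j m \<le> 1" using A that by auto
    have bb: "0 \<le> B j l q" "B j l q \<le> b" using B that by auto
    have ca: "closest_level \<theta> 1 (A i j m) (At i j m)" using At that by auto
    have ea: "\<bar>At i j m - A i j m\<bar> \<le> 1 / (2 * (real \<theta> - 1))"
      and a1: "0 \<le> At i j m" "At i j m \<le> 1"
      using cl_bound[OF th _ a ca] by auto
    have eb: "\<bar>Bt j l q - B j l q\<bar> \<le> b / (2 * (real \<theta> - 1))"
    proof (cases "B j l q = 0")
      case True
      then have "Bt j l q = 0" using Bt[of j l q] that by auto
      then show ?thesis using True th assms(5) by simp
    next
      case False
      then have "closest_level \<theta> b (B j l q) (Bt j l q)" using Bt[of j l q] that by auto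
      then show ?thesis using cl_bound[OF th assms(5) bb] by auto
    qed
    have "At i j m * Bt j l q - A i j m * B j l q
        = At i j m * (Bt j l q - B j l q) + (At i j m - A i j m) * B j l q"
      by (simp add: algebra_simps)
    then have "\<bar>At i j m * Bt j l q - A i j m * B j l q\<bar>
        \<le> \<bar>At i j m\<bar> * \<bar>Bt j l q - B j l q\<bar> + \<bar>At i j m - A i j m\<bar> * \<bar>B j l q\<bar>"
      by (simp add: abs_mult[symmetric] abs_triangle_ineq)
    also have "\<dots> \<le> 1 * (b / (2 * (real \<theta> - 1))) + (1 / (2 * (real \<theta> - 1))) * b"
      using a1 bb eb ea th
      by (intro add_mono mult_mono) auto
    also have "\<dots> = e"
    proof -
      have gen: "\<And>d::real. 1*(b/(2*d)) + (1/(2*d))*b = b/d" by (simp add: add_divide_distrib[symmetric])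
      show ?thesis unfolding e_def by (rule gen)
    qed
    finally show ?thesis .
  qed
  have entry: "\<bar>tprod r n3 At Bt i l k - tprod r n3 A B i l k\<bar> \<le> real r * real n3 * e"
    if "i < n1" "l < n2" "k < n3" for i l k
  proof -
    have "tprod r n3 At Bt i l k - tprod r n3 A B i l k
      = (\<Sum>j<r. \<Sum>q<n3. At i j ((k + n3 - q) mod n3) * Bt j l q - A i j ((k + n3 - q) mod n3) * B j l q)"
      unfolding tprod_def by (simp add: sum_subtractf)
    also have "\<bar>\<dots>\<bar> \<le> (\<Sum>j<r. \<Sum>q<n3. e)"
      apply (rule order_trans[OF sum_abs])
      apply (rule sum_mono)
      apply (rule order_trans[OF sum_abs])
      apply (rule sum_mono)
      using that assms(3) by (intro tmb) auto
    also have "\<dots> = real r * real n3 * e" by simp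
    finally show ?thesis .
  qed
  have fin: "finite {\<bar>tprod r n3 At Bt i j k - tprod r n3 A B i j k\<bar> | i j k. i < n1 \<and> j < n2 \<and> k < n3}"
  proof -
    have "{\<bar>tprod r n3 At Bt i j k - tprod r n3 A B i j k\<bar> | i j k. i < n1 \<and> j < n2 \<and> k < n3}
      \<subseteq> (\<lambda>(i,j,k). \<bar>tprod r n3 At Bt i j k - tprod r n3 A B i j k\<bar>) ` ({..<n1} \<times> {..<n2} \<times> {..<n3})"
    proof
      fix x assume "x \<in> {\<bar>tprod r n3 At Bt i j k - tprod r n3 A B i j k\<bar> | i j k. i < n1 \<and> j < n2 \<and> k < n3}"
      then obtain i j k where "i < n1" "j < n2" "k < n3" "x = \<bar>tprod r n3 At Bt i j k - tprod r n3 A B i j k\<bar>" by blast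
      then show "x \<in> (\<lambda>(i,j,k). \<bar>tprod r n3 At Bt i j k - tprod r n3 A B i j k\<bar>) ` ({..<n1} \<times> {..<n2} \<times> {..<n3})"
        by (intro image_eqI[where x="(i,j,k)"]) auto
    qed
    then show ?thesis by (rule finite_subset) auto
  qed
  have ne: "{\<bar>tprod r n3 At Bt i j k - tprod r n3 A B i j k\<bar> | i j k. i < n1 \<and> j < n2 \<and> k < n3} \<noteq> {}"
  proof -
    have "\<bar>tprod r n3 At Bt 0 0 0 - tprod r n3 A B 0 0 0\<bar> \<in> {\<bar>tprod r n3 At Bt i j k - tprod r n3 A B i j k\<bar> | i j k. i < n1 \<and> j < n2 \<and> k < n3}"
      using assms(1-3) by force
    then show ?thesis by blast
  qed
  have "tinf_norm n1 n2 n3 (\<lambda>i j k. tprod r n3 At Bt i j k - tprod r n3 A B i j k) \<le> real r * real n3 * e"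
    unfolding tinf_norm_def using fin ne entry by (subst Max_le_iff) auto
  also have "\<dots> \<le> 3 * real r * real n3 * b / real \<theta>"
  proof -
    have "e \<le> 3 * b / real \<theta>" unfolding e_def using th assms(5)
      by (simp add: field_simps)
    then have "real r * real n3 * e \<le> real r * real n3 * (3 * b / real \<theta>)"
      by (intro mult_left_mono) auto
    then show ?thesis by (simp add: mult.commute mult.left_commute)
  qed
  finally show ?thesis .
qed

end
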